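(* Let $Y$ be a $T_1$ topological space with a continuous action of a discrete group $G$ such that the isotropy group of each point is finite, let $\Gamma$ be a finitely generated discrete group, and let $\mathcal G=G\ltimes Y$. Then $\mathcal G^\Gamma$ is isomorphic as a topological groupoid to $G\ltimes\coprod_{\phi\in\mathrm{HOM}(\Gamma,G)}\big(Y^{\langle\phi\rangle},\phi\big)$, where $G$ acts by $g\cdot(y,\phi)=(gy,g\phi g^{-1})$.
   Context: For a topological groupoid $\mathcal G$ (objects $G_0$, arrows $G_1$, isotropy groups $G_x$), $\mathcal S^\Gamma_{\mathcal G}$ is the set of pairs of a point $x\in G_0$ and a homomorphism $\phi_x:\Gamma\to G_x$, topologized with the weak topology induced by the map $\phi_x\mapsto x\in G_0$ and, for each $\gamma\in\Gamma$, the evaluation maps $\phi_x\mapsto\phi_x(\gamma)\in G_1$. $\mathcal G$ acts on $\mathcal S^\Gamma_{\mathcal G}$ by conjugation: for $g\in G_1$ with $s(g)=x$, $g\cdot\phi_x$ is $\gamma\mapsto g\phi_x(\gamma)g^{-1}\in G_{t(g)}$. The $\Gamma$-sector groupoid is the translation groupoid $\mathcal G^\Gamma=\mathcal G\ltimes\mathcal S^\Gamma_{\mathcal G}$. $Y^{\langle\phi\rangle}$ denotes the fixed-point set of $\phi(\Gamma)$ in $Y$ (with the subspace topology), and $(Y^{\langle\phi\rangle},\phi)$ a copy of it labelled by $\phi$. *)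

theory Defs
  imports "HOL-Analysis.Analysis" "HOL-Algebra.Group_Action" "HOL-Algebra.Generated_Groups"
begin

text \<open>Objects are the points of tg_obj, arrows the points of tg_arr.
  tg_comp h g is "h after g", defined when tg_src h = tg_tgt g.\<close>

record ('o, 'a) tgpd =
  tg_obj  :: "'o topology"
  tg_arr  :: "'a topology"
  tg_src  :: "'a \<Rightarrow> 'o"
  tg_tgt  :: "'a \<Rightarrow> 'o"
  tg_comp :: "'a \<Rightarrow> 'a \<Rightarrow> 'a"
  tg_id   :: "'o \<Rightarrow> 'a"
  tg_inv  :: "'a \<Rightarrow> 'a"

definition tgpd_iso :: "('o1,'a1) tgpd \<Rightarrow> ('o2,'a2) tgpd \<Rightarrow> ('o1 \<Rightarrow> 'o2) \<Rightarrow> ('a1 \<Rightarrow> 'a2) \<Rightarrow> bool" where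
  "tgpd_iso A B F0 F1 \<longleftrightarrow>
     homeomorphic_map (tg_obj A) (tg_obj B) F0 \<and>
     homeomorphic_map (tg_arr A) (tg_arr B) F1 \<and>
     (\<forall>a\<in>topspace (tg_arr A). tg_src B (F1 a) = F0 (tg_src A a) \<and> tg_tgt B (F1 a) = F0 (tg_tgt A a)) \<and>
     (\<forall>a\<in>topspace (tg_arr A). \<forall>b\<in>topspace (tg_arr A). tg_src A b = tg_tgt A a \<longrightarrow>
          F1 (tg_comp A b a) = tg_comp B (F1 b) (F1 a)) \<and>
     (\<forall>x\<in>topspace (tg_obj A). F1 (tg_id A x) = tg_id B (F0 x))"

definition tgpd_isomorphic :: "('o1,'a1) tgpd \<Rightarrow> ('o2,'a2) tgpd \<Rightarrow> bool" where
  "tgpd_isomorphic A B \<longleftrightarrow> (\<exists>F0 F1. tgpd_iso A B F0 F1)"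

definition action_gpd :: "('g,'m) monoid_scheme \<Rightarrow> ('g \<Rightarrow> 'y \<Rightarrow> 'y) \<Rightarrow> 'y topology \<Rightarrow> ('y, 'g \<times> 'y) tgpd" where
  "action_gpd G act X =
    \<lparr> tg_obj = X,
      tg_arr = prod_topology (discrete_topology (carrier G)) X,
      tg_src = (\<lambda>(g,y). y),
      tg_tgt = (\<lambda>(g,y). act g y),
      tg_comp = (\<lambda>(h,y') (g,y). (h \<otimes>\<^bsub>G\<^esub> g, y)),
      tg_id = (\<lambda>y. (\<one>\<^bsub>G\<^esub>, y)),
      tg_inv = (\<lambda>(g,y). (inv\<^bsub>G\<^esub> g, act g y)) \<rparr>"

definition isotropy :: "('o,'a) tgpd \<Rightarrow> 'o \<Rightarrow> 'a monoid" where
  "isotropy Gd x = \<lparr> carrier = {a\<in>topspace (tg_arr Gd). tg_src Gd a = x \<and> tg_tgt Gd a = x},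
                     mult = tg_comp Gd, one = tg_id Gd x \<rparr>"

text \<open>Points of S^Gamma: pairs (x, phi_x) with phi_x : Gamma -> G_x a homomorphism
  (represented extensionally on the carrier of Gamma).\<close>
definition sector_points :: "('c,'m) monoid_scheme \<Rightarrow> ('o,'a) tgpd \<Rightarrow> ('o \<times> ('c \<Rightarrow> 'a)) set" where
  "sector_points Gam Gd = {(x, \<phi>). x \<in> topspace (tg_obj Gd) \<and>
        \<phi> \<in> hom Gam (isotropy Gd x) \<and> \<phi> \<in> extensional (carrier Gam)}"

definition sector_top :: "('c,'m) monoid_scheme \<Rightarrow> ('o,'a) tgpd \<Rightarrow> ('o \<times> ('c \<Rightarrow> 'a)) topology" where
  "sector_top Gam Gd = pullback_topology (sector_points Gam Gd)
      (\<lambda>(x,\<phi>). (x, \<lambda>\<gamma>\<in>carrier Gam. \<phi> \<gamma>))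
      (prod_topology (tg_obj Gd) (product_topology (\<lambda>_. tg_arr Gd) (carrier Gam)))"

definition sector_act :: "('c,'m) monoid_scheme \<Rightarrow> ('o,'a) tgpd \<Rightarrow> 'a \<Rightarrow> ('o \<times> ('c \<Rightarrow> 'a)) \<Rightarrow> ('o \<times> ('c \<Rightarrow> 'a))" where
  "sector_act Gam Gd g p = (tg_tgt Gd g,
      \<lambda>\<gamma>\<in>carrier Gam. tg_comp Gd (tg_comp Gd g (snd p \<gamma>)) (tg_inv Gd g))"

definition sector_gpd :: "('c,'m) monoid_scheme \<Rightarrow> ('o,'a) tgpd \<Rightarrow>
    ('o \<times> ('c \<Rightarrow> 'a), 'a \<times> ('o \<times> ('c \<Rightarrow> 'a))) tgpd" where
  "sector_gpd Gam Gd =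
    \<lparr> tg_obj = sector_top Gam Gd,
      tg_arr = subtopology (prod_topology (tg_arr Gd) (sector_top Gam Gd))
                 {(a, p). tg_src Gd a = fst p},
      tg_src = (\<lambda>(a,p). p),
      tg_tgt = (\<lambda>(a,p). sector_act Gam Gd a p),
      tg_comp = (\<lambda>(b,q) (a,p). (tg_comp Gd b a, p)),
      tg_id = (\<lambda>p. (tg_id Gd (fst p), p)),
      tg_inv = (\<lambda>(a,p). (tg_inv Gd a, sector_act Gam Gd a p)) \<rparr>"

definition HOMs :: "('c,'m) monoid_scheme \<Rightarrow> ('g,'n) monoid_scheme \<Rightarrow> ('c \<Rightarrow> 'g) set" where
  "HOMs Gam G = hom Gam G \<inter> extensional (carrier Gam)"

definition fixset :: "('c,'m) monoid_scheme \<Rightarrow> ('g \<Rightarrow> 'y \<Rightarrow> 'y) \<Rightarrow> 'y topology \<Rightarrow> ('c \<Rightarrow> 'g) \<Rightarrow> 'y set" where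
  "fixset Gam act Y \<phi> = {y\<in>topspace Y. \<forall>\<gamma>\<in>carrier Gam. act (\<phi> \<gamma>) y = y}"

text \<open>Coproduct over phi in HOM(Gamma,G) of (Y^<phi>, phi); points are pairs (phi, y).\<close>
definition fix_coprod :: "('c,'m) monoid_scheme \<Rightarrow> ('g,'n) monoid_scheme \<Rightarrow> ('g \<Rightarrow> 'y \<Rightarrow> 'y) \<Rightarrow> 'y topology
     \<Rightarrow> (('c \<Rightarrow> 'g) \<times> 'y) topology" where
  "fix_coprod Gam G act Y = sum_topology (\<lambda>\<phi>. subtopology Y (fixset Gam act Y \<phi>)) (HOMs Gam G)"

definition fix_act :: "('c,'m) monoid_scheme \<Rightarrow> ('g,'n) monoid_scheme \<Rightarrow> ('g \<Rightarrow> 'y \<Rightarrow> 'y)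
     \<Rightarrow> 'g \<Rightarrow> (('c \<Rightarrow> 'g) \<times> 'y) \<Rightarrow> (('c \<Rightarrow> 'g) \<times> 'y)" where
  "fix_act Gam G act g p = (\<lambda>\<gamma>\<in>carrier Gam. g \<otimes>\<^bsub>G\<^esub> fst p \<gamma> \<otimes>\<^bsub>G\<^esub> inv\<^bsub>G\<^esub> g, act g (snd p))"

end

theory Submission
  imports Defs
begin

definition F0 :: "('c,'m) monoid_scheme \<Rightarrow> ('y \<times> ('c \<Rightarrow> 'g \<times> 'y)) \<Rightarrow> (('c \<Rightarrow> 'g) \<times> 'y)" where
  "F0 Gam p = ((\<lambda>\<gamma>\<in>carrier Gam. fst (snd p \<gamma>)), fst p)"
definition H0 :: "('c,'m) monoid_scheme \<Rightarrow> (('c \<Rightarrow> 'g) \<times> 'y) \<Rightarrow> ('y \<times> ('c \<Rightarrow> 'g \<times> 'y))" where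
  "H0 Gam q = (snd q, \<lambda>\<gamma>\<in>carrier Gam. (fst q \<gamma>, snd q))"

lemma sp_iff: "(x,\<phi>) \<in> sector_points Gam (action_gpd G act Y) \<longleftrightarrow>
   x \<in> topspace Y \<and> \<phi> \<in> extensional (carrier Gam) \<and>
   (\<forall>\<gamma>\<in>carrier Gam. fst (\<phi> \<gamma>) \<in> carrier G \<and> snd (\<phi> \<gamma>) = x \<and> act (fst (\<phi> \<gamma>)) x = x) \<and>
   (\<forall>a\<in>carrier Gam. \<forall>b\<in>carrier Gam. \<phi> (a \<otimes>\<^bsub>Gam\<^esub> b) = (fst (\<phi> a) \<otimes>\<^bsub>G\<^esub> fst (\<phi> b), x))"
  unfolding sector_points_def hom_def isotropy_def Pi_def
  by (auto simp add: action_gpd_def split_beta mem_Times_iff)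

lemma hom_eq_on_generate:
  assumes "group Gam" "group G" "f \<in> hom Gam G" "g \<in> hom Gam G" "S \<subseteq> carrier Gam"
    "\<forall>s\<in>S. f s = g s" "x \<in> generate Gam S"
  shows "f x = g x"
  using assms(7)
proof (induction rule: generate.induct)
  have gf: "group_hom Gam G f" and gg: "group_hom Gam G g"
    by (simp_all add: group_hom_def group_hom_axioms_def assms)
  {
  case one
  then show ?case using group_hom.hom_one[OF gf] group_hom.hom_one[OF gg] by simp
  next
  case (incl h) then show ?case using assms by auto
  next
  case (inv h)
  have h: "h \<in> carrier Gam" using inv assms by auto
  show ?case using group_hom.hom_inv[OF gf h] group_hom.hom_inv[OF gg h] inv assms by simp
  next
  case (eng h1 h2)
  have "h1 \<in> carrier Gam" "h2 \<in> carrier Gam"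
    using eng group.generate_incl[OF assms(1) assms(5)] by auto
  then show ?case using eng assms(3,4) by (simp add: hom_mult)
  }
qed

lemma topspace_fc: "topspace (fix_coprod Gam G act Y) = Sigma (HOMs Gam G) (fixset Gam act Y)"
  unfolding fix_coprod_def by (auto simp: fixset_def)

lemma topspace_st: "topspace (sector_top Gam (action_gpd G act Y)) = sector_points Gam (action_gpd G act Y)"
proof -
  have "(\<lambda>(x,\<phi>). (x, \<lambda>\<gamma>\<in>carrier Gam. \<phi> \<gamma>)) p \<in> topspace (prod_topology (tg_obj (action_gpd G act Y))
        (product_topology (\<lambda>_. tg_arr (action_gpd G act Y)) (carrier Gam)))"
    if "p \<in> sector_points Gam (action_gpd G act Y)" for p
  proof -
    obtain x \<phi> where p: "p = (x,\<phi>)" by fastforce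
    note s = that[unfolded p sp_iff]
    have "\<phi> \<gamma> \<in> carrier G \<times> topspace Y" if "\<gamma> \<in> carrier Gam" for \<gamma>
      using s that by (auto simp: mem_Times_iff)
    then show ?thesis using s unfolding p by (simp add: action_gpd_def)
  qed
  then show ?thesis unfolding sector_top_def topspace_pullback_topology by blast
qed
lemma F0_in:
  assumes "group Gam" "p \<in> sector_points Gam (action_gpd G act Y)"
  shows "F0 Gam p \<in> Sigma (HOMs Gam G) (fixset Gam act Y)"
proof -
  obtain x \<phi> where p: "p = (x,\<phi>)" by fastforce
  note s = assms(2)[unfolded p sp_iff]
  show ?thesis using s unfolding p F0_def HOMs_def fixset_def hom_def
    by (auto simp: monoid.m_closed[OF group.is_monoid[OF assms(1)]])
qed

lemma H0_in:
  assumes "group Gam" "q \<in> Sigma (HOMs Gam G) (fixset Gam act Y)"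
  shows "H0 Gam q \<in> sector_points Gam (action_gpd G act Y)"
proof -
  obtain \<psi> y where q: "q = (\<psi>,y)" by fastforce
  show ?thesis using assms(2) unfolding q H0_def sp_iff HOMs_def fixset_def hom_def
    by (auto simp: monoid.m_closed[OF group.is_monoid[OF assms(1)]])
qed

lemma H0_F0:
  assumes "p \<in> sector_points Gam (action_gpd G act Y)"
  shows "H0 Gam (F0 Gam p) = p"
proof -
  obtain x \<phi> where p: "p = (x,\<phi>)" by fastforce
  note s = assms[unfolded p sp_iff]
  have "snd (H0 Gam (F0 Gam p)) \<gamma> = \<phi> \<gamma>" for \<gamma>
    using s unfolding p H0_def F0_def
    by (cases "\<gamma> \<in> carrier Gam") (auto simp: extensional_def prod_eq_iff)
  then show ?thesis unfolding p by (auto simp: H0_def F0_def prod_eq_iff fun_eq_iff)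
qed

lemma F0_H0:
  assumes "q \<in> Sigma (HOMs Gam G) (fixset Gam act Y)"
  shows "F0 Gam (H0 Gam q) = q"
proof -
  obtain \<psi> y where q: "q = (\<psi>,y)" by fastforce
  have "\<psi> \<in> extensional (carrier Gam)" using assms q by (auto simp: HOMs_def)
  then have "fst (F0 Gam (H0 Gam q)) \<gamma> = \<psi> \<gamma>" for \<gamma>
    unfolding q H0_def F0_def by (cases "\<gamma> \<in> carrier Gam") (auto simp: extensional_def)
  then show ?thesis unfolding q by (auto simp: H0_def F0_def prod_eq_iff fun_eq_iff)
qed

lemma cont_st_fst: "continuous_map (sector_top Gam (action_gpd G act Y)) Y fst"
proof -
  have "continuous_map (sector_top Gam (action_gpd G act Y)) Y
     (fst \<circ> (\<lambda>(x,\<phi>). (x, \<lambda>\<gamma>\<in>carrier Gam. \<phi> \<gamma>)))"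
    unfolding sector_top_def
    by (rule continuous_map_pullback) (simp add: action_gpd_def continuous_map_fst)
  then show ?thesis by (rule continuous_map_eq) (simp add: split_beta)
qed

lemma cont_st_eval:
  assumes "\<gamma> \<in> carrier Gam"
  shows "continuous_map (sector_top Gam (action_gpd G act Y))
            (prod_topology (discrete_topology (carrier G)) Y) (\<lambda>p. snd p \<gamma>)"
proof -
  have c: "continuous_map (prod_topology (tg_obj (action_gpd G act Y))
        (product_topology (\<lambda>_. tg_arr (action_gpd G act Y)) (carrier Gam)))
        (prod_topology (discrete_topology (carrier G)) Y) ((\<lambda>f. f \<gamma>) \<circ> snd)"
    by (rule continuous_map_compose[OF continuous_map_snd])
       (simp add: action_gpd_def continuous_map_product_projection[OF assms, where X="\<lambda>_. prod_topology (discrete_topology (carrier G)) Y", simplified])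
  have "continuous_map (sector_top Gam (action_gpd G act Y))
        (prod_topology (discrete_topology (carrier G)) Y)
     (((\<lambda>f. f \<gamma>) \<circ> snd) \<circ> (\<lambda>(x,\<phi>). (x, \<lambda>\<gamma>\<in>carrier Gam. \<phi> \<gamma>)))"
    unfolding sector_top_def by (rule continuous_map_pullback[OF c])
  then show ?thesis by (rule continuous_map_eq) (simp add: split_beta assms)
qed

lemma cont_sum_snd: "continuous_map (sum_topology (\<lambda>i. subtopology Y (S i)) I) Y snd"
  unfolding continuous_map_def
proof (intro conjI allI impI)
  show "snd \<in> topspace (sum_topology (\<lambda>i. subtopology Y (S i)) I) \<rightarrow> topspace Y" by auto
  fix W assume W: "openin Y W"
  show "openin (sum_topology (\<lambda>i. subtopology Y (S i)) I)
          {x \<in> topspace (sum_topology (\<lambda>i. subtopology Y (S i)) I). snd x \<in> W}"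
    unfolding openin_sum_topology
  proof (intro conjI ballI)
    fix i assume "i \<in> I"
    have "{x. (i, x) \<in> {x \<in> topspace (sum_topology (\<lambda>i. subtopology Y (S i)) I). snd x \<in> W}}
         = W \<inter> S i" using \<open>i \<in> I\<close> openin_subset[OF W] by auto
    then show "openin (subtopology Y (S i)) {x. (i, x) \<in> {x \<in> topspace (sum_topology (\<lambda>i. subtopology Y (S i)) I). snd x \<in> W}}"
      using W by (simp add: openin_subtopology_Int)
  qed auto
qed

lemma cont_sum_const:
  assumes "\<forall>i\<in>I. h i \<in> topspace Z"
  shows "continuous_map (sum_topology X I) Z (\<lambda>q. h (fst q))"
  unfolding continuous_map_def
proof (intro conjI allI impI)
  show "(\<lambda>q. h (fst q)) \<in> topspace (sum_topology X I) \<rightarrow> topspace Z" using assms by auto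
  fix W assume W: "openin Z W"
  show "openin (sum_topology X I) {x \<in> topspace (sum_topology X I). h (fst x) \<in> W}"
    unfolding openin_sum_topology
  proof (intro conjI ballI)
    fix i assume "i \<in> I"
    have "{x. (i, x) \<in> {x \<in> topspace (sum_topology X I). h (fst x) \<in> W}}
         = (if h i \<in> W then topspace (X i) else {})" using \<open>i \<in> I\<close> by auto
    then show "openin (X i) {x. (i, x) \<in> {x \<in> topspace (sum_topology X I). h (fst x) \<in> W}}"
      by simp
  qed auto
qed

lemma cont_H0:
  assumes "group Gam"
  shows "continuous_map (fix_coprod Gam G act Y) (sector_top Gam (action_gpd G act Y)) (H0 Gam)"
  unfolding sector_top_def
proof (rule continuous_map_pullback')
  show "topspace (fix_coprod Gam G act Y) \<subseteq> H0 Gam -` sector_points Gam (action_gpd G act Y)"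
    using H0_in[OF assms, of _ G act Y] by (auto simp: topspace_fc)
  have c1: "continuous_map (fix_coprod Gam G act Y) Y snd"
    unfolding fix_coprod_def by (rule cont_sum_snd)
  have c2: "continuous_map (fix_coprod Gam G act Y)
     (product_topology (\<lambda>_. prod_topology (discrete_topology (carrier G)) Y) (carrier Gam))
     (\<lambda>q. \<lambda>\<gamma>\<in>carrier Gam. (fst q \<gamma>, snd q))"
    unfolding continuous_map_componentwise
  proof (intro conjI ballI)
    fix k assume k: "k \<in> carrier Gam"
    have "continuous_map (fix_coprod Gam G act Y) (discrete_topology (carrier G)) (\<lambda>q. (\<lambda>\<psi>. \<psi> k) (fst q))"
      unfolding fix_coprod_def
      by (rule cont_sum_const) (use k in \<open>auto simp: HOMs_def hom_def\<close>)
    then show "continuous_map (fix_coprod Gam G act Y) (prod_topology (discrete_topology (carrier G)) Y)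
         (\<lambda>x. (\<lambda>\<gamma>\<in>carrier Gam. (fst x \<gamma>, snd x)) k)"
      using c1 k by (simp add: continuous_map_pairedI)
  qed (auto simp: image_subset_iff)
  have "continuous_map (fix_coprod Gam G act Y)
    (prod_topology (tg_obj (action_gpd G act Y))
        (product_topology (\<lambda>_. tg_arr (action_gpd G act Y)) (carrier Gam)))
     (\<lambda>q. (snd q, \<lambda>\<gamma>\<in>carrier Gam. (fst q \<gamma>, snd q)))"
    using c1 c2 by (simp add: action_gpd_def continuous_map_pairedI)
  then show "continuous_map (fix_coprod Gam G act Y)
    (prod_topology (tg_obj (action_gpd G act Y))
        (product_topology (\<lambda>_. tg_arr (action_gpd G act Y)) (carrier Gam)))
     ((\<lambda>(x,\<phi>). (x, \<lambda>\<gamma>\<in>carrier Gam. \<phi> \<gamma>)) \<circ> H0 Gam)"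
    by (rule continuous_map_eq) (simp add: H0_def)
qed

lemma cont_F0:
  assumes Gam: "group Gam" and G: "group G"
    and gen: "finite S" "S \<subseteq> carrier Gam" "generate Gam S = carrier Gam"
  shows "continuous_map (sector_top Gam (action_gpd G act Y)) (fix_coprod Gam G act Y) (F0 Gam)"
  unfolding continuous_map_def
proof (intro conjI allI impI)
  let ?T = "sector_top Gam (action_gpd G act Y)"
  let ?SP = "sector_points Gam (action_gpd G act Y)"
  show "F0 Gam \<in> topspace ?T \<rightarrow> topspace (fix_coprod Gam G act Y)"
    using F0_in[OF Gam, of _ G act Y] by (auto simp: topspace_st topspace_fc)
  fix U assume U: "openin (fix_coprod Gam G act Y) U"
  then obtain V where UV: "U = Sigma (HOMs Gam G) V"
    and V: "\<forall>\<psi>\<in>HOMs Gam G. openin (subtopology Y (fixset Gam act Y \<psi>)) (V \<psi>)"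
    unfolding fix_coprod_def openin_sum_topology_alt by blast
  have "\<forall>\<psi>\<in>HOMs Gam G. \<exists>W. openin Y W \<and> V \<psi> = W \<inter> fixset Gam act Y \<psi>"
    using V by (simp add: openin_subtopology)
  then obtain W where W: "\<And>\<psi>. \<psi>\<in>HOMs Gam G \<Longrightarrow> openin Y (W \<psi>) \<and> V \<psi> = W \<psi> \<inter> fixset Gam act Y \<psi>"
    by metis
  define E where "E \<psi> = {p \<in> topspace ?T. fst (F0 Gam p) = \<psi>}" for \<psi>
  have Eopen: "openin ?T (E \<psi>)" if \<psi>: "\<psi> \<in> HOMs Gam G" for \<psi>
  proof -
    have "E \<psi> = topspace ?T \<inter> \<Inter> ((\<lambda>s. {p \<in> topspace ?T. snd p s \<in> {\<psi> s} \<times> topspace Y}) ` S)"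
    proof (rule equalityI; rule subsetI)
      fix p assume p: "p \<in> E \<psi>"
      then have sp: "p \<in> ?SP" by (simp add: E_def topspace_st)
      obtain x \<phi> where pp: "p = (x,\<phi>)" by fastforce
      note s = sp[unfolded pp sp_iff]
      show "p \<in> topspace ?T \<inter> \<Inter> ((\<lambda>s. {p \<in> topspace ?T. snd p s \<in> {\<psi> s} \<times> topspace Y}) ` S)"
        using p s gen(2) unfolding E_def pp F0_def by (auto simp: mem_Times_iff)
    next
      fix p assume p: "p \<in> topspace ?T \<inter> \<Inter> ((\<lambda>s. {p \<in> topspace ?T. snd p s \<in> {\<psi> s} \<times> topspace Y}) ` S)"
      then have sp: "p \<in> ?SP" by (simp add: topspace_st)
      have h1: "fst (F0 Gam p) \<in> HOMs Gam G" using F0_in[OF Gam sp] by auto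
      have agree: "\<forall>s\<in>S. fst (F0 Gam p) s = \<psi> s"
        using p gen(2) by (auto simp: F0_def)
      have "fst (F0 Gam p) \<gamma> = \<psi> \<gamma>" for \<gamma>
      proof (cases "\<gamma> \<in> carrier Gam")
        case True
        then show ?thesis using hom_eq_on_generate[OF Gam G _ _ gen(2) agree, of \<gamma>] h1 \<psi> gen(3)
          by (auto simp: HOMs_def)
      next
        case False
        then show ?thesis using h1 \<psi> by (auto simp: HOMs_def extensional_def)
      qed
      then show "p \<in> E \<psi>" using p by (auto simp: E_def)
    qed
    moreover have "openin ?T {p \<in> topspace ?T. snd p s \<in> {\<psi> s} \<times> topspace Y}" if s: "s \<in> S" for s
    proof (rule openin_continuous_map_preimage[OF cont_st_eval])
      show "s \<in> carrier Gam" using s gen(2) by auto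
      have "\<psi> s \<in> carrier G" using \<psi> s gen(2) by (auto simp: HOMs_def hom_def)
      then show "openin (prod_topology (discrete_topology (carrier G)) Y) ({\<psi> s} \<times> topspace Y)"
        by (simp add: openin_prod_Times_iff)
    qed
    ultimately show ?thesis using gen(1) by (auto intro!: openin_Int_Inter)
  qed
  have "{p \<in> topspace ?T. F0 Gam p \<in> U} = (\<Union>\<psi>\<in>HOMs Gam G. E \<psi> \<inter> {p \<in> topspace ?T. fst p \<in> W \<psi>})"
  proof (rule equalityI; rule subsetI)
    fix p assume p: "p \<in> {p \<in> topspace ?T. F0 Gam p \<in> U}"
    then show "p \<in> (\<Union>\<psi>\<in>HOMs Gam G. E \<psi> \<inter> {p \<in> topspace ?T. fst p \<in> W \<psi>})"
      using W unfolding UV E_def by (auto simp: F0_def)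
  next
    fix p assume p: "p \<in> (\<Union>\<psi>\<in>HOMs Gam G. E \<psi> \<inter> {p \<in> topspace ?T. fst p \<in> W \<psi>})"
    then have sp: "p \<in> ?SP" by (auto simp: topspace_st E_def)
    have "F0 Gam p \<in> Sigma (HOMs Gam G) (fixset Gam act Y)" using F0_in[OF Gam sp] .
    then show "p \<in> {p \<in> topspace ?T. F0 Gam p \<in> U}"
      using p W unfolding UV E_def by (auto simp: F0_def)
  qed
  moreover have "openin ?T (E \<psi> \<inter> {p \<in> topspace ?T. fst p \<in> W \<psi>})" if "\<psi> \<in> HOMs Gam G" for \<psi>
    by (rule openin_Int[OF Eopen[OF that] openin_continuous_map_preimage[OF cont_st_fst conjunct1[OF W[OF that]]]])
  then have "openin ?T (\<Union>\<psi>\<in>HOMs Gam G. E \<psi> \<inter> {p \<in> topspace ?T. fst p \<in> W \<psi>})"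
    by (intro openin_Union) auto
  ultimately show "openin ?T {p \<in> topspace ?T. F0 Gam p \<in> U}" by simp
qed

theorem mainTheorem5:
  fixes G :: "('g, 'n) monoid_scheme"
    and Y :: "'y topology"
    and act :: "'g \<Rightarrow> 'y \<Rightarrow> 'y"
    and Gam :: "('c, 'm) monoid_scheme"
  assumes "t1_space Y"
    and "group_action G (topspace Y) act"
    and "\<forall>g\<in>carrier G. continuous_map Y Y (act g)"
    and "\<forall>y\<in>topspace Y. finite {g\<in>carrier G. act g y = y}"
    and "group Gam"
    and "\<exists>S. finite S \<and> S \<subseteq> carrier Gam \<and> generate Gam S = carrier Gam"
  shows "tgpd_isomorphic (sector_gpd Gam (action_gpd G act Y))
                         (action_gpd G (fix_act Gam G act) (fix_coprod Gam G act Y))"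
proof -
  have Gam: "group Gam" by fact
  have G: "group G" using assms(2) by (simp add: group_action_def group_hom_def)
  obtain S where gen: "finite S" "S \<subseteq> carrier Gam" "generate Gam S = carrier Gam"
    using assms(6) by blast
  let ?A = "sector_gpd Gam (action_gpd G act Y)"
  let ?B = "action_gpd G (fix_act Gam G act) (fix_coprod Gam G act Y)"
  let ?T = "sector_top Gam (action_gpd G act Y)"
  let ?SP = "sector_points Gam (action_gpd G act Y)"
  let ?FC = "fix_coprod Gam G act Y"
  define F1 where "F1 = (\<lambda>(a::'g\<times>'y, p::'y \<times> ('c \<Rightarrow> 'g \<times> 'y)). (fst a, F0 Gam p))"
  define H1 where "H1 = (\<lambda>(g::'g, q::('c \<Rightarrow> 'g) \<times> 'y). ((g, snd q), H0 Gam q))"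
  have objA: "tg_obj ?A = ?T" by (simp add: sector_gpd_def)
  have objB: "tg_obj ?B = ?FC" by (simp add: action_gpd_def)
  have arrA: "tg_arr ?A = subtopology (prod_topology (prod_topology (discrete_topology (carrier G)) Y) ?T)
                 {(a, p). snd a = fst p}"
    by (simp add: sector_gpd_def action_gpd_def split_beta)
  have arrB: "tg_arr ?B = prod_topology (discrete_topology (carrier G)) ?FC"
    by (simp add: action_gpd_def)
  have tA: "topspace (tg_arr ?A) = {((g,y),p). g \<in> carrier G \<and> y \<in> topspace Y \<and> p \<in> ?SP \<and> y = fst p}"
    unfolding arrA by (auto simp: topspace_st)
  have tB: "topspace (tg_arr ?B) = carrier G \<times> Sigma (HOMs Gam G) (fixset Gam act Y)"
    unfolding arrB by (simp add: topspace_fc)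
  have hobj: "homeomorphic_map (tg_obj ?A) (tg_obj ?B) (F0 Gam)"
    unfolding objA objB homeomorphic_map_maps homeomorphic_maps_def
  proof (intro exI[of _ "H0 Gam"] conjI ballI)
    show "continuous_map ?T ?FC (F0 Gam)" by (rule cont_F0[OF Gam G gen])
    show "continuous_map ?FC ?T (H0 Gam)" by (rule cont_H0[OF Gam])
    fix x assume "x \<in> topspace ?T"
    then show "H0 Gam (F0 Gam x) = x" by (intro H0_F0) (simp add: topspace_st)
  next
    fix x assume "x \<in> topspace ?FC"
    then show "F0 Gam (H0 Gam x) = x" by (intro F0_H0) (simp add: topspace_fc)
  qed
  have harr: "homeomorphic_map (tg_arr ?A) (tg_arr ?B) F1"
    unfolding homeomorphic_map_maps homeomorphic_maps_def
  proof (intro exI[of _ H1] conjI ballI)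
    show "continuous_map (tg_arr ?A) (tg_arr ?B) F1"
      unfolding arrA arrB F1_def split_beta
      by (intro continuous_map_pairedI continuous_map_from_subtopology
          continuous_map_compose[OF continuous_map_fst continuous_map_fst, unfolded o_def]
          continuous_map_compose[OF continuous_map_snd cont_F0[OF Gam G gen], unfolded o_def])
    have c1: "continuous_map ?FC Y snd" unfolding fix_coprod_def by (rule cont_sum_snd)
    show "continuous_map (tg_arr ?B) (tg_arr ?A) H1"
      unfolding arrA arrB H1_def split_beta
    proof (rule continuous_map_into_subtopology)
      show "continuous_map (prod_topology (discrete_topology (carrier G)) ?FC)
         (prod_topology (prod_topology (discrete_topology (carrier G)) Y) ?T)
         (\<lambda>x. ((fst x, snd (snd x)), H0 Gam (snd x)))"
        by (intro continuous_map_pairedI continuous_map_fst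
          continuous_map_compose[OF continuous_map_snd c1, unfolded o_def]
          continuous_map_compose[OF continuous_map_snd cont_H0[OF Gam], unfolded o_def])
    qed (auto simp: H0_def)
    fix x assume "x \<in> topspace (tg_arr ?A)"
    then obtain g y p where x: "x = ((g,y),p)" "p \<in> ?SP" "y = fst p" unfolding tA by auto
    show "H1 (F1 x) = x" using H0_F0[OF x(2)] x by (simp add: F1_def H1_def F0_def)
  next
    fix x assume "x \<in> topspace (tg_arr ?B)"
    then obtain g q where x: "x = (g,q)" "q \<in> Sigma (HOMs Gam G) (fixset Gam act Y)" unfolding tB by auto
    show "F1 (H1 x) = x" using F0_H0[OF x(2)] x by (simp add: F1_def H1_def)
  qed
  have srctgt: "\<forall>a\<in>topspace (tg_arr ?A). tg_src ?B (F1 a) = F0 Gam (tg_src ?A a) \<and>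
                   tg_tgt ?B (F1 a) = F0 Gam (tg_tgt ?A a)"
  proof
    fix x assume "x \<in> topspace (tg_arr ?A)"
    then obtain g y p where x: "x = ((g,y),p)" "p \<in> ?SP" "y = fst p" unfolding tA by auto
    obtain z \<phi> where p: "p = (z,\<phi>)" by fastforce
    show "tg_src ?B (F1 x) = F0 Gam (tg_src ?A x) \<and> tg_tgt ?B (F1 x) = F0 Gam (tg_tgt ?A x)"
      using x unfolding p
      by (auto simp: F1_def F0_def sector_gpd_def action_gpd_def sector_act_def fix_act_def fun_eq_iff split_beta)
  qed
  have comp: "\<forall>a\<in>topspace (tg_arr ?A). \<forall>b\<in>topspace (tg_arr ?A). tg_src ?A b = tg_tgt ?A a \<longrightarrow>
          F1 (tg_comp ?A b a) = tg_comp ?B (F1 b) (F1 a)"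
    by (auto simp: F1_def sector_gpd_def action_gpd_def split_beta)
  have ids: "\<forall>x\<in>topspace (tg_obj ?A). F1 (tg_id ?A x) = tg_id ?B (F0 Gam x)"
    by (auto simp: F1_def sector_gpd_def action_gpd_def split_beta)
  show ?thesis unfolding tgpd_isomorphic_def tgpd_iso_def
    using hobj harr srctgt comp ids by blast
qed


end
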